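(* Let $A$, $B$, $Y$ be sets and let $g:A\to Y$ and $h:B\to Y$ be injective relations. Let $P$ be the set of all paths (minimal non-empty synchronisations) of $(g,h)$, each path being regarded as a pair $\langle\alpha,\beta\rangle$ with $\alpha\subseteq A$, $\beta\subseteq B$. Define relations $p:P\to A$ and $q:P\to B$ by: $\langle\alpha,\beta\rangle\,p\,a$ iff $a\in\alpha$, and $\langle\alpha,\beta\rangle\,q\,b$ iff $b\in\beta$ (so $p(\langle\alpha,\beta\rangle)=\alpha$ and $q(\langle\alpha,\beta\rangle)=\beta$). Then $p$ and $q$ are injective relations, and the square $gp=hq$ is a pullback of $g$ and $h$ in the category $\mathbf{iRel}$.
   Context: A binary relation $R:A\to Z$ (i.e. $R\subseteq A\times Z$; write $aRz$ for $\langle a,z\rangle\in R$) is injective if $aRz$ and $a'Rz$ imply $a=a'$. $\mathbf{iRel}$ is the category of sets and injective relations, with composition of relations ($R$ then $S$ written $SR$). For a relation $R:A\to Z$ and $\alpha\subseteq A$, $R(\alpha)=\{z\in Z: aRz\text{ for some }a\in\alpha\}$, and $R(a)=R(\{a\})$. Given injective relations $g:A\to Y$ and $h:B\to Y$, a synchronisation is a pair $\langle\alpha,\beta\rangle$ with $\alpha\subseteq A$, $\beta\subseteq B$ and $g(\alpha)=h(\beta)$; such pairs are identified with subsets $\alpha+\beta$ of the disjoint union $A+B$, and inclusion, intersection, union and emptiness of pairs are taken via this identification. A path is a non-empty synchronisation that is minimal with respect to inclusion among non-empty synchronisations. *)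

theory Defs
  imports Main
begin

text \<open>A relation R : A -> Z is a set of pairs R \<subseteq> A \<times> Z. Composition "S after R"
  (written SR in the paper) is the relational composition R O S.\<close>

definition irel :: "('a \<times> 'z) set \<Rightarrow> 'a set \<Rightarrow> 'z set \<Rightarrow> bool" where
  "irel R A Z \<longleftrightarrow> R \<subseteq> A \<times> Z \<and>
     (\<forall>a a' z. (a, z) \<in> R \<longrightarrow> (a', z) \<in> R \<longrightarrow> a = a')"

definition synchronisation ::
  "'a set \<Rightarrow> 'b set \<Rightarrow> ('a \<times> 'y) set \<Rightarrow> ('b \<times> 'y) set \<Rightarrow> 'a set \<Rightarrow> 'b set \<Rightarrow> bool" where
  "synchronisation A B g h \<alpha> \<beta> \<longleftrightarrow> \<alpha> \<subseteq> A \<and> \<beta> \<subseteq> B \<and> g `` \<alpha> = h `` \<beta>"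

definition is_path ::
  "'a set \<Rightarrow> 'b set \<Rightarrow> ('a \<times> 'y) set \<Rightarrow> ('b \<times> 'y) set \<Rightarrow> 'a set \<Rightarrow> 'b set \<Rightarrow> bool" where
  "is_path A B g h \<alpha> \<beta> \<longleftrightarrow>
     synchronisation A B g h \<alpha> \<beta> \<and> (\<alpha> \<noteq> {} \<or> \<beta> \<noteq> {}) \<and>
     (\<forall>\<alpha>' \<beta>'. synchronisation A B g h \<alpha>' \<beta>' \<and> (\<alpha>' \<noteq> {} \<or> \<beta>' \<noteq> {}) \<and>
        \<alpha>' \<subseteq> \<alpha> \<and> \<beta>' \<subseteq> \<beta> \<longrightarrow> \<alpha>' = \<alpha> \<and> \<beta>' = \<beta>)"

definition paths ::
  "'a set \<Rightarrow> 'b set \<Rightarrow> ('a \<times> 'y) set \<Rightarrow> ('b \<times> 'y) set \<Rightarrow> ('a set \<times> 'b set) set" where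
  "paths A B g h = {(\<alpha>, \<beta>). is_path A B g h \<alpha> \<beta>}"

definition path_proj1 :: "('a set \<times> 'b set) set \<Rightarrow> (('a set \<times> 'b set) \<times> 'a) set" where
  "path_proj1 P = {((\<alpha>, \<beta>), a). (\<alpha>, \<beta>) \<in> P \<and> a \<in> \<alpha>}"

definition path_proj2 :: "('a set \<times> 'b set) set \<Rightarrow> (('a set \<times> 'b set) \<times> 'b) set" where
  "path_proj2 P = {((\<alpha>, \<beta>), b). (\<alpha>, \<beta>) \<in> P \<and> b \<in> \<beta>}"

end

theory Submission
  imports Defs
begin

lemma irel_inj: "irel g A Y \<Longrightarrow> (a, z) \<in> g \<Longrightarrow> (a', z) \<in> g \<Longrightarrow> a = a'"
  unfolding irel_def by blast

lemma img_diff: assumes "irel g A Y" shows "g `` (\<alpha> - \<alpha>') = g``\<alpha> - g``\<alpha>'"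
  using assms unfolding irel_def by blast

lemma img_int: assumes "irel g A Y" shows "g `` (\<alpha> \<inter> \<alpha>') = g``\<alpha> \<inter> g``\<alpha>'"
  using assms unfolding irel_def by blast

lemma img_Inter:
  assumes "irel g A Y" "S \<noteq> {}"
  shows "g `` (\<Inter>s\<in>S. f s) = (\<Inter>s\<in>S. g `` f s)"
proof
  show "g `` (\<Inter>s\<in>S. f s) \<subseteq> (\<Inter>s\<in>S. g `` f s)" by blast
  show "(\<Inter>s\<in>S. g `` f s) \<subseteq> g `` (\<Inter>s\<in>S. f s)"
  proof
    fix z assume z: "z \<in> (\<Inter>s\<in>S. g `` f s)"
    obtain s0 where s0: "s0 \<in> S" using assms(2) by blast
    have "z \<in> g `` f s0" by (rule INT_D[OF z s0])
    then obtain a0 where a0: "a0 \<in> f s0" "(a0, z) \<in> g" by (rule ImageE)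
    have "a0 \<in> f s" if "s \<in> S" for s
    proof -
      have "z \<in> g `` f s" by (rule INT_D[OF z that])
      then obtain a where "a \<in> f s" "(a, z) \<in> g" by (rule ImageE)
      moreover have "a = a0" using irel_inj[OF assms(1) calculation(2) a0(2)] .
      ultimately show ?thesis by simp
    qed
    then have "a0 \<in> (\<Inter>s\<in>S. f s)" by (rule INT_I)
    then show "z \<in> g `` (\<Inter>s\<in>S. f s)" using a0(2) by (rule ImageI[rotated])
  qed
qed

lemma sync_sym: "synchronisation A B g h \<alpha> \<beta> = synchronisation B A h g \<beta> \<alpha>"
  unfolding synchronisation_def by blast

lemma path_sym: "is_path A B g h \<alpha> \<beta> = is_path B A h g \<beta> \<alpha>"
  unfolding is_path_def sync_sym[of A B g h] by blast

lemma path_exists: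
  assumes ig: "irel g A Y" and ih: "irel h B Y"
    and s0: "synchronisation A B g h \<alpha>0 \<beta>0" and a: "a \<in> \<alpha>0"
  shows "\<exists>\<alpha> \<beta>. is_path A B g h \<alpha> \<beta> \<and> a \<in> \<alpha> \<and> \<alpha> \<subseteq> \<alpha>0 \<and> \<beta> \<subseteq> \<beta>0"
proof -
  define S where "S = {(\<alpha>,\<beta>). synchronisation A B g h \<alpha> \<beta> \<and> a \<in> \<alpha>}"
  define C1 where "C1 = (\<Inter>s\<in>S. fst s)"
  define C2 where "C2 = (\<Inter>s\<in>S. snd s)"
  have inS: "(\<alpha>0,\<beta>0) \<in> S" using s0 a S_def by simp
  hence ne: "S \<noteq> {}" by blast
  have sub: "C1 \<subseteq> \<alpha>0" "C2 \<subseteq> \<beta>0" using inS unfolding C1_def C2_def by force+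
  have aC: "a \<in> C1" unfolding C1_def S_def by auto
  have "g `` C1 = (\<Inter>s\<in>S. g `` fst s)" unfolding C1_def using img_Inter[OF ig ne] .
  also have "\<dots> = (\<Inter>s\<in>S. h `` snd s)"
  proof -
    have eq: "\<And>s. s \<in> S \<Longrightarrow> g `` fst s = h `` snd s"
      subgoal for s by (cases s) (simp add: S_def synchronisation_def)
      done
    show ?thesis using image_cong[OF refl eq, of S] by simp
  qed
  also have "\<dots> = h `` C2" unfolding C2_def using img_Inter[OF ih ne] by simp
  finally have gh: "g `` C1 = h `` C2" .
  have syC: "synchronisation A B g h C1 C2"
    using gh sub s0 unfolding synchronisation_def by blast
  have least: "C1 \<subseteq> \<alpha>' \<and> C2 \<subseteq> \<beta>'" if "(\<alpha>',\<beta>') \<in> S" for \<alpha>' \<beta>'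
    using that unfolding C1_def C2_def by force
  have "is_path A B g h C1 C2"
    unfolding is_path_def
  proof (intro conjI allI impI)
    show "synchronisation A B g h C1 C2" by (rule syC)
    show "C1 \<noteq> {} \<or> C2 \<noteq> {}" using aC by blast
    fix \<alpha>' \<beta>'
    assume H: "synchronisation A B g h \<alpha>' \<beta>' \<and> (\<alpha>' \<noteq> {} \<or> \<beta>' \<noteq> {}) \<and> \<alpha>' \<subseteq> C1 \<and> \<beta>' \<subseteq> C2"
    have "C1 \<subseteq> \<alpha>' \<and> C2 \<subseteq> \<beta>'"
    proof (cases "a \<in> \<alpha>'")
      case True
      then show ?thesis using H least[of \<alpha>' \<beta>'] S_def by blast
    next
      case False
      have "g `` (C1 - \<alpha>') = h `` (C2 - \<beta>')"
        using img_diff[OF ig] img_diff[OF ih] gh H unfolding synchronisation_def by simp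
      hence "synchronisation A B g h (C1 - \<alpha>') (C2 - \<beta>')"
        using syC unfolding synchronisation_def by blast
      hence "(C1 - \<alpha>', C2 - \<beta>') \<in> S" using aC False S_def by simp
      hence "C1 \<subseteq> C1 - \<alpha>' \<and> C2 \<subseteq> C2 - \<beta>'" using least by blast
      hence False using H by blast
      then show ?thesis ..
    qed
    then show "\<alpha>' = C1" "\<beta>' = C2" using H by blast+
  qed
  then show ?thesis using aC sub by blast
qed

lemma path_exists2:
  assumes ig: "irel g A Y" and ih: "irel h B Y"
    and s0: "synchronisation A B g h \<alpha>0 \<beta>0" and b: "b \<in> \<beta>0"
  shows "\<exists>\<alpha> \<beta>. is_path A B g h \<alpha> \<beta> \<and> b \<in> \<beta> \<and> \<alpha> \<subseteq> \<alpha>0 \<and> \<beta> \<subseteq> \<beta>0"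
proof -
  obtain \<beta> \<alpha> where H: "is_path B A h g \<beta> \<alpha>" "b \<in> \<beta>" "\<beta> \<subseteq> \<beta>0" "\<alpha> \<subseteq> \<alpha>0"
    using path_exists[OF ih ig sync_sym[THEN iffD1, OF s0] b] by blast
  have "is_path A B g h \<alpha> \<beta>" by (rule path_sym[THEN iffD2, OF H(1)])
  then show ?thesis using H(2-4) by blast
qed

lemma path_unique:
  assumes ig: "irel g A Y" and ih: "irel h B Y"
    and p1: "is_path A B g h \<alpha> \<beta>" and p2: "is_path A B g h \<alpha>' \<beta>'"
    and a: "a \<in> \<alpha>" "a \<in> \<alpha>'"
  shows "\<alpha> = \<alpha>' \<and> \<beta> = \<beta>'"
proof -
  have "synchronisation A B g h (\<alpha> \<inter> \<alpha>') (\<beta> \<inter> \<beta>')"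
    using p1 p2 img_int[OF ig] img_int[OF ih] unfolding is_path_def synchronisation_def by auto
  moreover have "\<alpha> \<inter> \<alpha>' \<noteq> {}" using a by blast
  ultimately have "\<alpha> \<inter> \<alpha>' = \<alpha> \<and> \<beta> \<inter> \<beta>' = \<beta>" "\<alpha> \<inter> \<alpha>' = \<alpha>' \<and> \<beta> \<inter> \<beta>' = \<beta>'"
    using p1 p2 unfolding is_path_def by blast+
  then show ?thesis by blast
qed

lemma path_unique2:
  assumes ig: "irel g A Y" and ih: "irel h B Y"
    and p1: "is_path A B g h \<alpha> \<beta>" and p2: "is_path A B g h \<alpha>' \<beta>'"
    and b: "b \<in> \<beta>" "b \<in> \<beta>'"
  shows "\<alpha> = \<alpha>' \<and> \<beta> = \<beta>'"
  using path_unique[OF ih ig path_sym[THEN iffD1, OF p1] path_sym[THEN iffD1, OF p2] b] by blast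

lemma pair3_cases:
  obtains a b c where "z = ((a,b),c)"
proof -
  obtain p c where pc: "z = (p,c)" by (rule prod.exhaust)
  obtain a b where ab: "p = (a,b)" by (rule prod.exhaust)
  have "z = ((a,b),c)" using pc ab by simp
  then show ?thesis by (rule that)
qed

lemma memP: "(\<alpha>,\<beta>) \<in> paths A B g h \<longleftrightarrow> is_path A B g h \<alpha> \<beta>"
  unfolding paths_def by simp

lemma memp: "((\<alpha>,\<beta>),a) \<in> path_proj1 (paths A B g h) \<longleftrightarrow> is_path A B g h \<alpha> \<beta> \<and> a \<in> \<alpha>"
  unfolding path_proj1_def paths_def by simp

lemma memq: "((\<alpha>,\<beta>),b) \<in> path_proj2 (paths A B g h) \<longleftrightarrow> is_path A B g h \<alpha> \<beta> \<and> b \<in> \<beta>"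
  unfolding path_proj2_def paths_def by simp

lemma path_sub: "is_path A B g h \<alpha> \<beta> \<Longrightarrow> \<alpha> \<subseteq> A \<and> \<beta> \<subseteq> B \<and> g `` \<alpha> = h `` \<beta>"
  unfolding is_path_def synchronisation_def
  apply (elim conjE) apply (intro conjI) apply assumption+ done

lemma path_ne: "is_path A B g h \<alpha> \<beta> \<Longrightarrow> \<alpha> \<noteq> {} \<or> \<beta> \<noteq> {}"
  unfolding is_path_def apply (elim conjE) apply assumption done

lemma proj1_irel:
  assumes ig: "irel g A Y" and ih: "irel h B Y"
  shows "irel (path_proj1 (paths A B g h)) (paths A B g h) A"
  unfolding irel_def
proof (intro conjI allI impI)
  show "path_proj1 (paths A B g h) \<subseteq> paths A B g h \<times> A"
  proof
    fix z assume z: "z \<in> path_proj1 (paths A B g h)"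
    obtain \<alpha> \<beta> a where zz: "z = ((\<alpha>,\<beta>),a)" by (rule pair3_cases)
    have "is_path A B g h \<alpha> \<beta>" "a \<in> \<alpha>" using z unfolding zz memp by simp_all
    then show "z \<in> paths A B g h \<times> A" unfolding zz using path_sub[of A B g h \<alpha> \<beta>] memP[of \<alpha> \<beta> A B g h] by auto
  qed
  fix u u' a assume H: "(u, a) \<in> path_proj1 (paths A B g h)" "(u', a) \<in> path_proj1 (paths A B g h)"
  obtain \<alpha> \<beta> where u: "u = (\<alpha>,\<beta>)" by (rule prod.exhaust)
  obtain \<alpha>' \<beta>' where u': "u' = (\<alpha>',\<beta>')" by (rule prod.exhaust)
  have "is_path A B g h \<alpha> \<beta>" "is_path A B g h \<alpha>' \<beta>'" "a \<in> \<alpha>" "a \<in> \<alpha>'"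
    using H unfolding u u' memp by simp_all
  then show "u = u'" using path_unique[OF ig ih] unfolding u u' by blast
qed

lemma proj2_irel:
  assumes ig: "irel g A Y" and ih: "irel h B Y"
  shows "irel (path_proj2 (paths A B g h)) (paths A B g h) B"
  unfolding irel_def
proof (intro conjI allI impI)
  show "path_proj2 (paths A B g h) \<subseteq> paths A B g h \<times> B"
  proof
    fix z assume z: "z \<in> path_proj2 (paths A B g h)"
    obtain \<alpha> \<beta> a where zz: "z = ((\<alpha>,\<beta>),a)" by (rule pair3_cases)
    have "is_path A B g h \<alpha> \<beta>" "a \<in> \<beta>" using z unfolding zz memq by simp_all
    then show "z \<in> paths A B g h \<times> B" unfolding zz using path_sub[of A B g h \<alpha> \<beta>] memP[of \<alpha> \<beta> A B g h] by auto
  qed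
  fix u u' a assume H: "(u, a) \<in> path_proj2 (paths A B g h)" "(u', a) \<in> path_proj2 (paths A B g h)"
  obtain \<alpha> \<beta> where u: "u = (\<alpha>,\<beta>)" by (rule prod.exhaust)
  obtain \<alpha>' \<beta>' where u': "u' = (\<alpha>',\<beta>')" by (rule prod.exhaust)
  have "is_path A B g h \<alpha> \<beta>" "is_path A B g h \<alpha>' \<beta>'" "a \<in> \<beta>" "a \<in> \<beta>'"
    using H unfolding u u' memq by simp_all
  then show "u = u'" using path_unique2[OF ig ih] unfolding u u' by blast
qed

lemma proj_comm:
  fixes g :: "('a \<times> 'y) set" and h :: "('b \<times> 'y) set"
  shows "path_proj1 (paths A B g h) O g = path_proj2 (paths A B g h) O h"
proof (rule set_eqI)
  fix z :: "('a set \<times> 'b set) \<times> 'y"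
  obtain \<alpha> \<beta> y where z: "z = ((\<alpha>,\<beta>),y)" by (rule pair3_cases)
  have "z \<in> path_proj1 (paths A B g h) O g \<longleftrightarrow> is_path A B g h \<alpha> \<beta> \<and> y \<in> g `` \<alpha>"
    unfolding z relcomp_unfold Image_def by (auto simp: memp)
  also have "\<dots> \<longleftrightarrow> is_path A B g h \<alpha> \<beta> \<and> y \<in> h `` \<beta>"
    using path_sub[of A B g h \<alpha> \<beta>] by auto
  also have "\<dots> \<longleftrightarrow> z \<in> path_proj2 (paths A B g h) O h"
    unfolding z relcomp_unfold Image_def by (auto simp: memq)
  finally show "z \<in> path_proj1 (paths A B g h) O g \<longleftrightarrow> z \<in> path_proj2 (paths A B g h) O h" .
qed

lemma irel_sub: "irel R A Z \<Longrightarrow> (a, z) \<in> R \<Longrightarrow> a \<in> A \<and> z \<in> Z"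
  unfolding irel_def by blast

lemma pullback:
  fixes A :: "'a set" and B :: "'b set" and Y :: "'y set"
    and g :: "('a \<times> 'y) set" and h :: "('b \<times> 'y) set"
    and X :: "'x set" and x :: "('x \<times> 'a) set" and y :: "('x \<times> 'b) set"
  assumes ig: "irel g A Y" and ih: "irel h B Y"
    and ix: "irel x X A" and iy: "irel y X B" and xy: "x O g = y O h"
  defines "P \<equiv> paths A B g h"
  defines "p \<equiv> path_proj1 P"
  defines "q \<equiv> path_proj2 P"
  shows "\<exists>!u. irel u X P \<and> u O p = x \<and> u O q = y"
proof -
  have memP': "(\<alpha>,\<beta>) \<in> P \<longleftrightarrow> is_path A B g h \<alpha> \<beta>" for \<alpha> \<beta>
    unfolding P_def by (rule memP)
  have memp': "((\<alpha>,\<beta>),a) \<in> p \<longleftrightarrow> is_path A B g h \<alpha> \<beta> \<and> a \<in> \<alpha>" for \<alpha> \<beta> a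
    unfolding p_def P_def by (rule memp)
  have memq': "((\<alpha>,\<beta>),b) \<in> q \<longleftrightarrow> is_path A B g h \<alpha> \<beta> \<and> b \<in> \<beta>" for \<alpha> \<beta> b
    unfolding q_def P_def by (rule memq)
  have syn: "synchronisation A B g h (x``{\<xi>}) (y``{\<xi>})" for \<xi>
  proof -
    have "g `` (x``{\<xi>}) = (x O g) `` {\<xi>}" by (simp add: relcomp_Image)
    also have "\<dots> = (y O h) `` {\<xi>}" by (simp only: xy)
    also have "\<dots> = h `` (y``{\<xi>})" by (simp add: relcomp_Image)
    finally have e: "g `` (x``{\<xi>}) = h `` (y``{\<xi>})" .
    have "x``{\<xi>} \<subseteq> A" using irel_sub[OF ix] by blast
    moreover have "y``{\<xi>} \<subseteq> B" using irel_sub[OF iy] by blast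
    ultimately show ?thesis using e unfolding synchronisation_def by simp
  qed
  define u where "u = {(\<xi>,\<pi>). \<xi> \<in> X \<and> \<pi> \<in> P \<and> fst \<pi> \<subseteq> x``{\<xi>} \<and> snd \<pi> \<subseteq> y``{\<xi>}}"
  have memu: "(\<xi>,(\<alpha>,\<beta>)) \<in> u \<longleftrightarrow> \<xi> \<in> X \<and> is_path A B g h \<alpha> \<beta> \<and> \<alpha> \<subseteq> x``{\<xi>} \<and> \<beta> \<subseteq> y``{\<xi>}"
    for \<xi> \<alpha> \<beta> by (simp add: u_def memP')
  have iu: "irel u X P"
    unfolding irel_def
  proof (intro conjI allI impI)
    show "u \<subseteq> X \<times> P" unfolding u_def by auto
    fix \<xi> \<xi>' \<pi> assume H: "(\<xi>, \<pi>) \<in> u" "(\<xi>', \<pi>) \<in> u"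
    obtain \<alpha> \<beta> where pi: "\<pi> = (\<alpha>,\<beta>)" by (rule prod.exhaust)
    have H': "is_path A B g h \<alpha> \<beta>" "\<alpha> \<subseteq> x``{\<xi>}" "\<beta> \<subseteq> y``{\<xi>}" "\<alpha> \<subseteq> x``{\<xi>'}" "\<beta> \<subseteq> y``{\<xi>'}"
      using H unfolding pi memu by simp_all
    have "\<alpha> \<noteq> {} \<or> \<beta> \<noteq> {}" by (rule path_ne[OF H'(1)])
    then show "\<xi> = \<xi>'"
    proof
      assume "\<alpha> \<noteq> {}" then obtain a where "a \<in> \<alpha>" by blast
      then have "(\<xi>,a) \<in> x" "(\<xi>',a) \<in> x" using H'(2,4) by auto
      then show ?thesis by (rule irel_inj[OF ix])
    next
      assume "\<beta> \<noteq> {}" then obtain b where "b \<in> \<beta>" by blast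
      then have "(\<xi>,b) \<in> y" "(\<xi>',b) \<in> y" using H'(3,5) by auto
      then show ?thesis by (rule irel_inj[OF iy])
    qed
  qed
  have up: "u O p = x"
  proof (rule set_eqI)
    fix z :: "'x \<times> 'a"
    obtain \<xi> a where z: "z = (\<xi>,a)" by (rule prod.exhaust)
    show "z \<in> u O p \<longleftrightarrow> z \<in> x"
    proof
      assume "z \<in> u O p"
      hence "(\<xi>,a) \<in> u O p" using z by simp
      then obtain \<pi> where pi: "(\<xi>,\<pi>) \<in> u" "(\<pi>,a) \<in> p" by (rule relcompE) simp
      obtain \<alpha> \<beta> where ab: "\<pi> = (\<alpha>,\<beta>)" by (rule prod.exhaust)
      have "a \<in> \<alpha>" "\<alpha> \<subseteq> x``{\<xi>}" using pi unfolding ab memu memp' by simp_all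
      then show "z \<in> x" unfolding z by blast
    next
      assume "z \<in> x"
      hence zx: "(\<xi>,a) \<in> x" using z by simp
      hence "\<xi> \<in> X" using irel_sub[OF ix] by blast
      moreover have "a \<in> x``{\<xi>}" using zx by blast
      then obtain \<alpha> \<beta> where "is_path A B g h \<alpha> \<beta> \<and> a \<in> \<alpha> \<and> \<alpha> \<subseteq> x``{\<xi>} \<and> \<beta> \<subseteq> y``{\<xi>}"
        using path_exists[OF ig ih syn[of \<xi>], of a] by blast
      ultimately have "(\<xi>,(\<alpha>,\<beta>)) \<in> u" "((\<alpha>,\<beta>),a) \<in> p" by (simp_all add: memu memp')
      then show "z \<in> u O p" unfolding z by (rule relcompI)
    qed
  qed
  have uq: "u O q = y"
  proof (rule set_eqI)
    fix z :: "'x \<times> 'b"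
    obtain \<xi> b where z: "z = (\<xi>,b)" by (rule prod.exhaust)
    show "z \<in> u O q \<longleftrightarrow> z \<in> y"
    proof
      assume "z \<in> u O q"
      hence "(\<xi>,b) \<in> u O q" using z by simp
      then obtain \<pi> where pi: "(\<xi>,\<pi>) \<in> u" "(\<pi>,b) \<in> q" by (rule relcompE) simp
      obtain \<alpha> \<beta> where ab: "\<pi> = (\<alpha>,\<beta>)" by (rule prod.exhaust)
      have "b \<in> \<beta>" "\<beta> \<subseteq> y``{\<xi>}" using pi unfolding ab memu memq' by simp_all
      then show "z \<in> y" unfolding z by blast
    next
      assume "z \<in> y"
      hence zy: "(\<xi>,b) \<in> y" using z by simp
      hence "\<xi> \<in> X" using irel_sub[OF iy] by blast
      moreover have "b \<in> y``{\<xi>}" using zy by blast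
      then obtain \<alpha> \<beta> where "is_path A B g h \<alpha> \<beta> \<and> b \<in> \<beta> \<and> \<alpha> \<subseteq> x``{\<xi>} \<and> \<beta> \<subseteq> y``{\<xi>}"
        using path_exists2[OF ig ih syn[of \<xi>], of b] by blast
      ultimately have "(\<xi>,(\<alpha>,\<beta>)) \<in> u" "((\<alpha>,\<beta>),b) \<in> q" by (simp_all add: memu memq')
      then show "z \<in> u O q" unfolding z by (rule relcompI)
    qed
  qed
  show ?thesis
  proof (rule ex1I[of _ u])
    show "irel u X P \<and> u O p = x \<and> u O q = y" using iu up uq by simp
    fix u' assume H: "irel u' X P \<and> u' O p = x \<and> u' O q = y"
    hence iu': "irel u' X P" and up': "u' O p = x" and uq': "u' O q = y" by simp_all
    show "u' = u"
    proof (rule set_eqI)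
      fix z :: "'x \<times> ('a set \<times> 'b set)"
      obtain \<xi> \<alpha> \<beta> where z: "z = (\<xi>,(\<alpha>,\<beta>))" by (rule prod_cases3)
      show "z \<in> u' \<longleftrightarrow> z \<in> u"
      proof
        assume "z \<in> u'"
        hence zu: "(\<xi>,(\<alpha>,\<beta>)) \<in> u'" using z by simp
        have "\<xi> \<in> X \<and> (\<alpha>,\<beta>) \<in> P" by (rule irel_sub[OF iu' zu])
        hence XP: "\<xi> \<in> X" "is_path A B g h \<alpha> \<beta>" using memP' by simp_all
        have "\<alpha> \<subseteq> x``{\<xi>}"
        proof
          fix a assume "a \<in> \<alpha>"
          hence "((\<alpha>,\<beta>),a) \<in> p" using XP memp' by simp
          hence "(\<xi>,a) \<in> u' O p" using zu by (rule relcompI[rotated])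
          then show "a \<in> x``{\<xi>}" using up' by simp
        qed
        moreover have "\<beta> \<subseteq> y``{\<xi>}"
        proof
          fix b assume "b \<in> \<beta>"
          hence "((\<alpha>,\<beta>),b) \<in> q" using XP memq' by simp
          hence "(\<xi>,b) \<in> u' O q" using zu by (rule relcompI[rotated])
          then show "b \<in> y``{\<xi>}" using uq' by simp
        qed
        ultimately show "z \<in> u" unfolding z memu using XP by simp
      next
        assume "z \<in> u"
        hence H': "\<xi> \<in> X" "is_path A B g h \<alpha> \<beta>" "\<alpha> \<subseteq> x``{\<xi>}" "\<beta> \<subseteq> y``{\<xi>}"
          unfolding z memu by simp_all
        have "\<alpha> \<noteq> {} \<or> \<beta> \<noteq> {}" by (rule path_ne[OF H'(2)])
        then show "z \<in> u'"
        proof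
          assume "\<alpha> \<noteq> {}" then obtain a where a: "a \<in> \<alpha>" by blast
          hence "(\<xi>,a) \<in> x" using H'(3) by blast
          hence "(\<xi>,a) \<in> u' O p" using up' by simp
          then obtain \<pi> where pi: "(\<xi>,\<pi>) \<in> u'" "(\<pi>,a) \<in> p" by (rule relcompE) simp
          obtain \<alpha>' \<beta>' where ab: "\<pi> = (\<alpha>',\<beta>')" by (rule prod.exhaust)
          have "is_path A B g h \<alpha>' \<beta>'" "a \<in> \<alpha>'" using pi(2) unfolding ab memp' by simp_all
          hence "\<alpha>' = \<alpha> \<and> \<beta>' = \<beta>" using path_unique[OF ig ih _ H'(2), of \<alpha>' \<beta>' a] a by simp
          then show ?thesis using pi(1) unfolding z ab by simp
        next
          assume "\<beta> \<noteq> {}" then obtain b where b: "b \<in> \<beta>" by blast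
          hence "(\<xi>,b) \<in> y" using H'(4) by blast
          hence "(\<xi>,b) \<in> u' O q" using uq' by simp
          then obtain \<pi> where pi: "(\<xi>,\<pi>) \<in> u'" "(\<pi>,b) \<in> q" by (rule relcompE) simp
          obtain \<alpha>' \<beta>' where ab: "\<pi> = (\<alpha>',\<beta>')" by (rule prod.exhaust)
          have "is_path A B g h \<alpha>' \<beta>'" "b \<in> \<beta>'" using pi(2) unfolding ab memq' by simp_all
          hence "\<alpha>' = \<alpha> \<and> \<beta>' = \<beta>" using path_unique2[OF ig ih _ H'(2), of \<alpha>' \<beta>' b] b by simp
          then show ?thesis using pi(1) unfolding z ab by simp
        qed
      qed
    qed
  qed
qed

theorem theorem1:
  fixes A :: "'a set" and B :: "'b set" and Y :: "'y set"
    and g :: "('a \<times> 'y) set" and h :: "('b \<times> 'y) set"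
  assumes "irel g A Y" and "irel h B Y"
  defines "P \<equiv> paths A B g h"
  defines "p \<equiv> path_proj1 P"
  defines "q \<equiv> path_proj2 P"
  shows "irel p P A \<and> irel q P B \<and> p O g = q O h \<and>
    (\<forall>(X :: 'x set) x y. irel x X A \<and> irel y X B \<and> x O g = y O h \<longrightarrow>
       (\<exists>!u. irel u X P \<and> u O p = x \<and> u O q = y))"
proof (intro conjI allI impI)
  show "irel p P A" unfolding p_def P_def by (rule proj1_irel[OF assms(1,2)])
  show "irel q P B" unfolding q_def P_def by (rule proj2_irel[OF assms(1,2)])
  show "p O g = q O h" unfolding p_def q_def P_def by (rule proj_comm)
  fix X :: "'x set" and x y
  assume H: "irel x X A \<and> irel y X B \<and> x O g = y O h"
  then have "irel x X A" "irel y X B" "x O g = y O h" by simp_all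
  then show "\<exists>!u. irel u X P \<and> u O p = x \<and> u O q = y"
    unfolding p_def q_def P_def by (rule pullback[OF assms(1,2)])
qed

end
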